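(* Let $\omega\in(0,1)$ and $I=\lceil\log\omega/\log\gamma\rceil$. Let $\pi_0$ be an arbitrary deterministic stationary memoryless policy and, for $i=1,\dots,I$, let $\hat q_i:\mathcal{S}\times\mathcal{A}\to\mathbb{R}$ be any function with $|\hat q_i(s,a)-q^{\pi_{i-1}}(s,a)|\le\omega$ for all $(s,a)\in\mathcal{S}\times\mathcal{A}$, and set $\pi_i=\pi_{\hat q_i,\pi_{i-1},\emptyset}$ (the CAPI update with $\mathcal{S}_{\text{fix}}=\emptyset$). Then $\pi_I$ is $5\omega/(1-\gamma)$-optimal on $\mathcal{S}$, i.e. $v^\star(s)-v^{\pi_I}(s)\le 5\omega/(1-\gamma)$ for all $s\in\mathcal{S}$.
   Context: An MDP has measurable state space $\mathcal{S}$, finite ordered action set $\mathcal{A}=(\mathcal{A}_1,\dots,\mathcal{A}_{|\mathcal{A}|})$, transition kernel $P$ and rewards in $[0,1]$; discount $\gamma\in(0,1)$. $v^\pi(s)=\mathbb{E}_{\pi,s}[\sum_{t\ge0}\gamma^tR_t]$, $q^\pi(s,a)=\mathbb{E}_{\pi,s,a}[\sum_{t\ge0}\gamma^tR_t]$, $v^\star=\sup_\pi v^\pi$. A policy $\pi$ is $\Delta$-optimal on $\mathcal{S}'$ if $v^\star(s)-v^\pi(s)\le\Delta$ for all $s\in\mathcal{S}'$. CAPI update: given $\hat q$, a deterministic policy $\pi$, $\omega>0$ and $\mathcal{S}_{\text{fix}}\subseteq\mathcal{S}$, $\pi_{\hat q,\pi,\mathcal{S}_{\text{fix}}}(s)=\arg\max_a\hat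 q(s,a)$ (ties broken by smallest index) if $s\notin\mathcal{S}_{\text{fix}}$ and $\hat q(s,\pi(s))+\omega<\max_a\hat q(s,a)-\omega$, and $=\pi(s)$ otherwise. *)

theory Defs
  imports "HOL-Probability.Probability"
begin

text \<open>States of type 's,
  with state space the measurable space M; actions form a finite linearly ordered
  type 'a (the order is the index order of the action list).  P s a is the next-state
  distribution, r s a the (mean) reward, g the discount factor.\<close>

definition is_mdp :: "'s measure \<Rightarrow> ('s \<Rightarrow> 'a \<Rightarrow> 's measure) \<Rightarrow> ('s \<Rightarrow> 'a \<Rightarrow> real) \<Rightarrow> real \<Rightarrow> bool" where
  "is_mdp M P r g \<longleftrightarrow>
     (\<forall>s\<in>space M. \<forall>a. prob_space (P s a) \<and> sets (P s a) = sets M) \<and>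
     (\<forall>a. (\<lambda>s. P s a) \<in> M \<rightarrow>\<^sub>M subprob_algebra M) \<and>
     (\<forall>a. (\<lambda>s. r s a) \<in> borel_measurable M) \<and>
     (\<forall>s\<in>space M. \<forall>a. 0 \<le> r s a \<and> r s a \<le> 1) \<and>
     0 < g \<and> g < 1"

text \<open>General (history-dependent, randomized) policies: the history is the list of
  previously visited state-action pairs, the second argument the current state.\<close>

type_synonym ('s, 'a) policy = "('s \<times> 'a) list \<Rightarrow> 's \<Rightarrow> 'a pmf"

text \<open>Expected discounted reward over the first n steps, when the history so far is h
  and the current state is s (finite-horizon recursion for the trajectory law).\<close>

fun horizon_value :: "('s \<Rightarrow> 'a \<Rightarrow> 's measure) \<Rightarrow> ('s \<Rightarrow> 'a \<Rightarrow> real) \<Rightarrow> real \<Rightarrow> ('s, 'a) policy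
     \<Rightarrow> nat \<Rightarrow> ('s \<times> 'a) list \<Rightarrow> 's \<Rightarrow> ennreal" where
  "horizon_value P r g \<pi> 0 h s = 0"
| "horizon_value P r g \<pi> (Suc n) h s =
     (\<integral>\<^sup>+ a. (ennreal (r s a) + ennreal g *
        (\<integral>\<^sup>+ s'. horizon_value P r g \<pi> n (h @ [(s, a)]) s' \<partial>(P s a))) \<partial>measure_pmf (\<pi> h s))"

text \<open>v^pi(s) = E_{pi,s}[sum_t g^t R_t]\<close>
definition mdp_value :: "('s \<Rightarrow> 'a \<Rightarrow> 's measure) \<Rightarrow> ('s \<Rightarrow> 'a \<Rightarrow> real) \<Rightarrow> real \<Rightarrow> ('s, 'a) policy \<Rightarrow> 's \<Rightarrow> real" where
  "mdp_value P r g \<pi> s = enn2real (SUP n. horizon_value P r g \<pi> n [] s)"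

definition opt_value :: "('s \<Rightarrow> 'a \<Rightarrow> 's measure) \<Rightarrow> ('s \<Rightarrow> 'a \<Rightarrow> real) \<Rightarrow> real \<Rightarrow> 's \<Rightarrow> real" where
  "opt_value P r g s = enn2real (SUP \<pi>. SUP n. horizon_value P r g \<pi> n [] s)"

definition det_policy :: "('s \<Rightarrow> 'a) \<Rightarrow> ('s, 'a) policy" where
  "det_policy d = (\<lambda>h s. return_pmf (d s))"

text \<open>q^d(s,a) = E_{d,s,a}[sum_t g^t R_t]: first action a, then follow d.\<close>
definition q_value :: "('s \<Rightarrow> 'a \<Rightarrow> 's measure) \<Rightarrow> ('s \<Rightarrow> 'a \<Rightarrow> real) \<Rightarrow> real \<Rightarrow> ('s \<Rightarrow> 'a) \<Rightarrow> 's \<Rightarrow> 'a \<Rightarrow> real" where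
  "q_value P r g d s a =
     mdp_value P r g (\<lambda>h s'. if h = [] then return_pmf a else return_pmf (d s')) s"

text \<open>CAPI update; ties in the argmax broken by the smallest action.\<close>
definition capi :: "('s \<Rightarrow> 'a::{finite,linorder} \<Rightarrow> real) \<Rightarrow> ('s \<Rightarrow> 'a) \<Rightarrow> real \<Rightarrow> 's set \<Rightarrow> 's \<Rightarrow> 'a" where
  "capi qh d \<omega> Sfix s =
     (if s \<notin> Sfix \<and> qh s (d s) + \<omega> < Max (range (qh s)) - \<omega>
      then (LEAST a. \<forall>b. qh s b \<le> qh s a) else d s)"

end

theory Submission
  imports Defs
begin

locale mdpc =
  fixes M :: "'s measure" and P :: "'s \<Rightarrow> 'a::{finite,linorder} \<Rightarrow> 's measure"
    and r :: "'s \<Rightarrow> 'a \<Rightarrow> real" and g :: real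
  assumes mdp: "is_mdp M P r g"
begin

lemma probP: "s \<in> space M \<Longrightarrow> prob_space (P s a)" using mdp by (auto simp: is_mdp_def)
lemma setsP: "s \<in> space M \<Longrightarrow> sets (P s a) = sets M" using mdp by (auto simp: is_mdp_def)
lemma spaceP: "s \<in> space M \<Longrightarrow> space (P s a) = space M" using setsP sets_eq_imp_space_eq by blast
lemma Pmeas: "(\<lambda>s. P s a) \<in> M \<rightarrow>\<^sub>M subprob_algebra M" using mdp by (auto simp: is_mdp_def)
lemma rmeas: "(\<lambda>s. r s a) \<in> borel_measurable M" using mdp by (auto simp: is_mdp_def)
lemma r0: "s \<in> space M \<Longrightarrow> 0 \<le> r s a" using mdp by (auto simp: is_mdp_def)
lemma r1: "s \<in> space M \<Longrightarrow> r s a \<le> 1" using mdp by (auto simp: is_mdp_def)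
lemma g0: "0 < g" using mdp by (auto simp: is_mdp_def)
lemma g1: "g < 1" using mdp by (auto simp: is_mdp_def)

definition B :: real where "B = 1 / (1 - g)"
lemma B_pos: "0 < B" using g1 by (simp add: B_def)
lemma B_eq: "1 + g * B = B" using g1 by (simp add: B_def field_simps)

lemma int_const_le:
  assumes "s \<in> space M" "\<And>x. x \<in> space M \<Longrightarrow> f x \<le> c"
  shows "(\<integral>\<^sup>+x. f x \<partial>P s a) \<le> c"
proof -
  interpret prob_space "P s a" using probP assms by auto
  have "(\<integral>\<^sup>+x. f x \<partial>P s a) \<le> (\<integral>\<^sup>+x. c \<partial>P s a)"
    by (rule nn_integral_mono) (use assms spaceP in auto)
  also have "\<dots> = c" by (simp add: emeasure_space_1)
  finally show ?thesis .
qed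

lemma dmeasP:
  assumes "d \<in> M \<rightarrow>\<^sub>M count_space UNIV"
  shows "(\<lambda>s. P s (d s)) \<in> M \<rightarrow>\<^sub>M subprob_algebra M"
  by (rule measurable_compose_countable[OF Pmeas assms])

lemma dmeasr:
  assumes "d \<in> M \<rightarrow>\<^sub>M count_space UNIV"
  shows "(\<lambda>s. r s (d s)) \<in> borel_measurable M"
  by (rule measurable_compose_countable[OF rmeas assms])

primrec W :: "('s \<Rightarrow> 'a) \<Rightarrow> nat \<Rightarrow> 's \<Rightarrow> ennreal" where
  "W d 0 s = 0"
| "W d (Suc n) s = (if s \<in> space M then ennreal (r s (d s)) + ennreal g * (\<integral>\<^sup>+x. W d n x \<partial>P s (d s)) else 0)"

lemma W_meas:
  assumes "d \<in> M \<rightarrow>\<^sub>M count_space UNIV"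
  shows "W d n \<in> borel_measurable M"
proof (induction n)
  case 0 then show ?case by simp
next
  case (Suc n)
  have "(\<lambda>s. \<integral>\<^sup>+x. W d n x \<partial>P s (d s)) \<in> borel_measurable M"
    by (rule measurable_compose[OF dmeasP[OF assms] nn_integral_measurable_subprob_algebra[OF Suc]])
  moreover have "(\<lambda>s. ennreal (r s (d s))) \<in> borel_measurable M" using dmeasr[OF assms] by measurable
  ultimately have "(\<lambda>s. ennreal (r s (d s)) + ennreal g * (\<integral>\<^sup>+x. W d n x \<partial>P s (d s))) \<in> borel_measurable M"
    by measurable
  then show ?case
    by (subst measurable_cong[where g="\<lambda>s. ennreal (r s (d s)) + ennreal g * (\<integral>\<^sup>+x. W d n x \<partial>P s (d s))"]) auto
qed

lemma W_bound: "W d n s \<le> ennreal B"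
proof (induction n arbitrary: s)
  case 0 then show ?case by simp
next
  case (Suc n)
  show ?case
  proof (cases "s \<in> space M")
    case True
    have "W d (Suc n) s \<le> ennreal 1 + ennreal g * ennreal B"
      using True by (auto intro!: add_mono mult_left_mono int_const_le Suc r1)
    also have "\<dots> = ennreal B" using ennreal_plus[of 1 "g*B"] g0 B_pos B_eq by (simp add: ennreal_mult)
    finally show ?thesis .
  qed simp
qed

lemma W_mono: "W d n s \<le> W d (Suc n) s"
proof (induction n arbitrary: s)
  case 0 then show ?case by simp
next
  case (Suc n)
  then show ?case
    by (auto intro!: add_mono mult_left_mono nn_integral_mono)
qed

lemma W_inc: "incseq (\<lambda>n. W d n s)"
  by (rule incseq_SucI) (rule W_mono)


lemma SUP_shift0: fixes f :: "nat \<Rightarrow> ennreal" assumes "f 0 = 0"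
  shows "(SUP n. f n) = (SUP n. f (Suc n))"
proof (rule antisym)
  show "(SUP n. f n) \<le> (SUP n. f (Suc n))"
  proof (rule SUP_least)
    fix n show "f n \<le> (SUP n. f (Suc n))"
      using assms by (cases n) (auto intro: SUP_upper2)
  qed
  show "(SUP n. f (Suc n)) \<le> (SUP n. f n)" by (rule SUP_least) (rule SUP_upper, simp)
qed

definition V :: "('s \<Rightarrow> 'a) \<Rightarrow> 's \<Rightarrow> ennreal" where "V d s = (SUP n. W d n s)"
definition Q :: "('s \<Rightarrow> 'a) \<Rightarrow> 's \<Rightarrow> 'a \<Rightarrow> ennreal" where
  "Q d s a = ennreal (r s a) + ennreal g * (\<integral>\<^sup>+x. V d x \<partial>P s a)"

lemma V_meas: "d \<in> M \<rightarrow>\<^sub>M count_space UNIV \<Longrightarrow> V d \<in> borel_measurable M"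
  unfolding V_def by (intro borel_measurable_SUP) (auto intro: W_meas)

lemma V_bound: "V d s \<le> ennreal B"
  unfolding V_def by (rule SUP_least) (rule W_bound)

lemma int_V:
  assumes d: "d \<in> M \<rightarrow>\<^sub>M count_space UNIV" and s: "s \<in> space M"
  shows "(\<integral>\<^sup>+x. V d x \<partial>P s a) = (SUP n. \<integral>\<^sup>+x. W d n x \<partial>P s a)"
proof -
  have "(\<integral>\<^sup>+x. V d x \<partial>P s a) = (\<integral>\<^sup>+x. (SUP n. W d n x) \<partial>P s a)" by (simp add: V_def)
  also have "\<dots> = (SUP n. \<integral>\<^sup>+x. W d n x \<partial>P s a)"
  proof (rule nn_integral_monotone_convergence_SUP)
    show "incseq (W d)" by (intro incseq_SucI le_funI W_mono)
    fix i show "W d i \<in> borel_measurable (P s a)"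
      by (subst measurable_cong_sets[OF setsP[OF s] refl]) (rule W_meas[OF d])
  qed
  finally show ?thesis .
qed

lemma Q_SUP:
  assumes d: "d \<in> M \<rightarrow>\<^sub>M count_space UNIV" and s: "s \<in> space M"
  shows "Q d s a = (SUP n. ennreal (r s a) + ennreal g * (\<integral>\<^sup>+x. W d n x \<partial>P s a))"
  unfolding Q_def int_V[OF assms]
  by (simp add: SUP_mult_left_ennreal ennreal_SUP_add_right)

lemma V_fix:
  assumes d: "d \<in> M \<rightarrow>\<^sub>M count_space UNIV" and s: "s \<in> space M"
  shows "V d s = Q d s (d s)"
  unfolding Q_SUP[OF assms] V_def using s by (subst SUP_shift0) auto

lemma Q_bound: assumes "s \<in> space M" shows "Q d s a \<le> ennreal B"
proof -
  have "Q d s a \<le> ennreal 1 + ennreal g * ennreal B"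
    unfolding Q_def using assms by (auto intro!: add_mono mult_left_mono int_const_le V_bound r1)
  also have "\<dots> = ennreal B" using ennreal_plus[of 1 "g*B"] g0 B_pos B_eq by (simp add: ennreal_mult)
  finally show ?thesis .
qed


lemma hv_det:
  "s \<in> space M \<Longrightarrow> horizon_value P r g (det_policy d) n h s = W d n s"
proof (induction n arbitrary: h s)
  case 0 then show ?case by simp
next
  case (Suc n)
  have "(\<integral>\<^sup>+x. horizon_value P r g (det_policy d) n (h @ [(s, d s)]) x \<partial>P s (d s))
      = (\<integral>\<^sup>+x. W d n x \<partial>P s (d s))"
    by (rule nn_integral_cong) (use Suc spaceP in auto)
  then show ?case using Suc.prems by (simp add: det_policy_def)
qed

definition qpol :: "'a \<Rightarrow> ('s \<Rightarrow> 'a) \<Rightarrow> ('s, 'a) policy" where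
  "qpol a d = (\<lambda>h s'. if h = [] then return_pmf a else return_pmf (d s'))"

lemma hv_q_ne:
  "h \<noteq> [] \<Longrightarrow> s \<in> space M \<Longrightarrow> horizon_value P r g (qpol a d) n h s = W d n s"
proof (induction n arbitrary: h s)
  case 0 then show ?case by simp
next
  case (Suc n)
  have "(\<integral>\<^sup>+x. horizon_value P r g (qpol a d) n (h @ [(s, d s)]) x \<partial>P s (d s))
      = (\<integral>\<^sup>+x. W d n x \<partial>P s (d s))"
    by (rule nn_integral_cong) (use Suc spaceP in auto)
  then show ?case using Suc.prems by (simp add: qpol_def)
qed

lemma hv_q0:
  "s \<in> space M \<Longrightarrow> horizon_value P r g (qpol a d) (Suc n) [] s
     = ennreal (r s a) + ennreal g * (\<integral>\<^sup>+x. W d n x \<partial>P s a)"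
proof -
  assume s: "s \<in> space M"
  have "(\<integral>\<^sup>+x. horizon_value P r g (qpol a d) n [(s, a)] x \<partial>P s a)
      = (\<integral>\<^sup>+x. W d n x \<partial>P s a)"
    by (rule nn_integral_cong) (use s spaceP hv_q_ne in auto)
  then show ?thesis by (simp add: qpol_def)
qed

lemma fin_B: "x \<le> ennreal B \<Longrightarrow> ennreal (enn2real x) = x"
  by (metis ennreal_enn2real ennreal_less_top top.not_eq_extremum order.strict_trans1)

lemma mdp_det:
  assumes "s \<in> space M"
  shows "V d s = ennreal (mdp_value P r g (det_policy d) s)"
proof -
  have "mdp_value P r g (det_policy d) s = enn2real (V d s)"
    unfolding mdp_value_def V_def using hv_det[OF assms] by simp
  then show ?thesis using fin_B[OF V_bound] by simp
qed

lemma q_eq: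
  assumes d: "d \<in> M \<rightarrow>\<^sub>M count_space UNIV" and s: "s \<in> space M"
  shows "Q d s a = ennreal (q_value P r g d s a)"
proof -
  have "q_value P r g d s a = enn2real (SUP n. horizon_value P r g (qpol a d) n [] s)"
    unfolding q_value_def mdp_value_def qpol_def ..
  also have "(SUP n. horizon_value P r g (qpol a d) n [] s) = (SUP n. horizon_value P r g (qpol a d) (Suc n) [] s)"
    by (rule SUP_shift0) simp
  also have "\<dots> = Q d s a" unfolding Q_SUP[OF d s] hv_q0[OF s] ..
  finally show ?thesis using fin_B[OF Q_bound[OF s]] by simp
qed


lemma int_add_const:
  assumes "f \<in> borel_measurable M" "s \<in> space M"
  shows "(\<integral>\<^sup>+x. f x + ennreal c \<partial>P s a) = (\<integral>\<^sup>+x. f x \<partial>P s a) + ennreal c"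
proof -
  interpret prob_space "P s a" using probP assms by auto
  have fm: "f \<in> borel_measurable (P s a)"
    by (subst measurable_cong_sets[OF setsP[OF assms(2)] refl]) (rule assms)
  show ?thesis by (simp add: nn_integral_add[OF fm] emeasure_space_1)
qed

lemma improve_aux:
  assumes d: "d \<in> M \<rightarrow>\<^sub>M count_space UNIV" and d': "d' \<in> M \<rightarrow>\<^sub>M count_space UNIV"
    and h: "\<And>s. s \<in> space M \<Longrightarrow> V d s \<le> Q d s (d' s)"
  shows "s \<in> space M \<Longrightarrow> V d s \<le> W d' n s + ennreal (g ^ n * B)"
proof (induction n arbitrary: s)
  case 0 then show ?case using V_bound by simp
next
  case (Suc n)
  have "V d s \<le> Q d s (d' s)" using h Suc by blast
  also have "\<dots> \<le> ennreal (r s (d' s)) + ennreal g * (\<integral>\<^sup>+x. W d' n x + ennreal (g ^ n * B) \<partial>P s (d' s))"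
    unfolding Q_def by (intro add_mono mult_left_mono nn_integral_mono) (use Suc spaceP in auto)
  also have "\<dots> = ennreal (r s (d' s)) + ennreal g * (\<integral>\<^sup>+x. W d' n x \<partial>P s (d' s)) + ennreal g * ennreal (g ^ n * B)"
    by (simp add: int_add_const[OF W_meas[OF d'] Suc.prems] distrib_left add.assoc)
  also have "\<dots> = W d' (Suc n) s + ennreal (g ^ Suc n * B)"
    using Suc.prems g0 B_pos by (simp add: ennreal_mult[symmetric] mult.assoc)
  finally show ?case .
qed

lemma improve:
  assumes d: "d \<in> M \<rightarrow>\<^sub>M count_space UNIV" and d': "d' \<in> M \<rightarrow>\<^sub>M count_space UNIV"
    and h: "\<And>s. s \<in> space M \<Longrightarrow> V d s \<le> Q d s (d' s)" and s: "s \<in> space M"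
  shows "V d s \<le> V d' s"
proof -
  define a where "a = enn2real (V d s)"
  define b where "b = enn2real (V d' s)"
  have Va: "V d s = ennreal a" unfolding a_def using fin_B[OF V_bound] by simp
  have Vb: "V d' s = ennreal b" unfolding b_def using fin_B[OF V_bound] by simp
  have b0: "0 \<le> b" unfolding b_def by simp
  have le: "a \<le> b + g ^ n * B" for n
  proof -
    have "ennreal a \<le> W d' n s + ennreal (g ^ n * B)" using improve_aux[OF d d' h s] Va by simp
    also have "\<dots> \<le> ennreal b + ennreal (g ^ n * B)"
      using Vb V_def by (metis add_mono order_refl SUP_upper UNIV_I)
    also have "\<dots> = ennreal (b + g ^ n * B)" using b0 g0 B_pos by simp
    finally have "ennreal a \<le> ennreal (b + g ^ n * B)" .
    then show ?thesis using b0 g0 B_pos by (subst (asm) ennreal_le_iff) auto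
  qed
  have "a \<le> b"
  proof (rule ccontr)
    assume "\<not> a \<le> b"
    then have "(a - b) / B > 0" using B_pos by simp
    then obtain n where "g ^ n < (a - b) / B" using real_arch_pow_inv g1 by blast
    then have "g ^ n * B < a - b" using B_pos by (simp add: field_simps)
    with le[of n] show False by simp
  qed
  then show ?thesis using Va Vb by (simp add: ennreal_leI)
qed


lemma improve_Q:
  assumes d: "d \<in> M \<rightarrow>\<^sub>M count_space UNIV" and d': "d' \<in> M \<rightarrow>\<^sub>M count_space UNIV"
    and h: "\<And>s. s \<in> space M \<Longrightarrow> V d s \<le> Q d s (d' s)" and s: "s \<in> space M"
  shows "Q d s a \<le> Q d' s a"
  unfolding Q_def
  by (intro add_mono mult_left_mono nn_integral_mono improve[OF d d' h]) (use s spaceP in auto)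

lemma pmf_int_le:
  assumes "\<And>a. f a \<le> c" shows "(\<integral>\<^sup>+a. f a \<partial>measure_pmf p) \<le> c"
proof -
  have "(\<integral>\<^sup>+a. f a \<partial>measure_pmf p) \<le> (\<integral>\<^sup>+a. c \<partial>measure_pmf p)"
    by (rule nn_integral_mono) (rule assms)
  also have "\<dots> = c" by (simp add: measure_pmf.emeasure_space_1)
  finally show ?thesis .
qed

lemma H_bound: "s \<in> space M \<Longrightarrow> horizon_value P r g pol n h s \<le> ennreal B"
proof (induction n arbitrary: h s)
  case 0 then show ?case by simp
next
  case (Suc n)
  have "horizon_value P r g pol (Suc n) h s \<le> ennreal 1 + ennreal g * ennreal B"
    by (simp only: horizon_value.simps, rule pmf_int_le, intro add_mono mult_left_mono int_const_le Suc)
       (use Suc.prems r1 spaceP in auto)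
  also have "\<dots> = ennreal B" using ennreal_plus[of 1 "g*B"] g0 B_pos B_eq by (simp add: ennreal_mult)
  finally show ?case .
qed

lemma step:
  assumes dp: "dp \<in> M \<rightarrow>\<^sub>M count_space UNIV" and d: "d \<in> M \<rightarrow>\<^sub>M count_space UNIV"
    and e0: "0 \<le> e" and w0: "0 \<le> w"
    and IH: "\<And>pol n h s. s \<in> space M \<Longrightarrow> horizon_value P r g pol n h s \<le> V dp s + ennreal e"
    and greedy: "\<And>s a. s \<in> space M \<Longrightarrow> Q dp s a \<le> Q dp s (d s) + ennreal w"
    and impr: "\<And>s. s \<in> space M \<Longrightarrow> V dp s \<le> Q dp s (d s)"
    and s: "s \<in> space M"
  shows "horizon_value P r g pol n h s \<le> V d s + ennreal (w + g * e)"
proof (cases n)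
  case 0 then show ?thesis by simp
next
  case (Suc m)
  have "horizon_value P r g pol (Suc m) h s \<le> V d s + ennreal (w + g * e)"
  proof (simp only: horizon_value.simps, rule pmf_int_le)
    fix a
    have "ennreal (r s a) + ennreal g * (\<integral>\<^sup>+x. horizon_value P r g pol m (h @ [(s, a)]) x \<partial>P s a)
        \<le> ennreal (r s a) + ennreal g * (\<integral>\<^sup>+x. V dp x + ennreal e \<partial>P s a)"
      by (intro add_mono mult_left_mono nn_integral_mono IH) (use s spaceP in auto)
    also have "\<dots> = Q dp s a + ennreal g * ennreal e"
      unfolding Q_def by (simp add: int_add_const[OF V_meas[OF dp] s] distrib_left add.assoc)
    also have "\<dots> \<le> Q dp s (d s) + ennreal w + ennreal g * ennreal e"
      by (intro add_mono greedy s order_refl)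
    also have "\<dots> \<le> V d s + ennreal (w + g * e)"
    proof -
      have "Q dp s (d s) \<le> Q d s (d s)" by (rule improve_Q[OF dp d impr s])
      then have "Q dp s (d s) \<le> V d s" using V_fix[OF d s] by simp
      moreover have "ennreal w + ennreal g * ennreal e = ennreal (w + g * e)"
        using w0 e0 g0 by (simp add: ennreal_mult)
      ultimately show ?thesis by (metis add.assoc add_mono order_refl)
    qed
    finally show "ennreal (r s a) + ennreal g * (\<integral>\<^sup>+x. horizon_value P r g pol m (h @ [(s, a)]) x \<partial>P s a)
        \<le> V d s + ennreal (w + g * e)" .
  qed
  then show ?thesis using Suc by simp
qed

end

lemma least_char:
  fixes qh :: "'a::{finite,linorder} \<Rightarrow> real"
  shows "(LEAST a. \<forall>b. qh b \<le> qh a) = x \<longleftrightarrow>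
     (\<forall>b. qh b \<le> qh x) \<and> (\<forall>c. (\<forall>b. qh b \<le> qh c) \<longrightarrow> x \<le> c)"
proof
  assume "(\<forall>b. qh b \<le> qh x) \<and> (\<forall>c. (\<forall>b. qh b \<le> qh c) \<longrightarrow> x \<le> c)"
  then show "(LEAST a. \<forall>b. qh b \<le> qh a) = x" by (intro Least_equality) auto
next
  assume L: "(LEAST a. \<forall>b. qh b \<le> qh a) = x"
  have ne: "\<exists>a. \<forall>b. qh b \<le> qh a"
  proof -
    have "Max (range qh) \<in> range qh" by (rule Max_in) auto
    then obtain m where "qh m = Max (range qh)" by (metis imageE)
    then have "\<forall>b. qh b \<le> qh m" using Max_ge[of "range qh"] by auto
    then show ?thesis by blast
  qed
  have eq: "x = Min {a. \<forall>b. qh b \<le> qh a}" using L Least_Min[of "\<lambda>a. \<forall>b. qh b \<le> qh a"] ne by simp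
  have "x \<in> {a. \<forall>b. qh b \<le> qh a}" unfolding eq by (rule Min_in) (use ne in auto)
  moreover have "\<forall>c. (\<forall>b. qh b \<le> qh c) \<longrightarrow> x \<le> c" unfolding eq by (auto intro: Min_le)
  ultimately show "(\<forall>b. qh b \<le> qh x) \<and> (\<forall>c. (\<forall>b. qh b \<le> qh c) \<longrightarrow> x \<le> c)" by auto
qed

lemma capi_real:
  fixes qh q :: "'a::{finite,linorder} \<Rightarrow> real"
  assumes ap: "\<And>a. \<bar>qh a - q a\<bar> \<le> \<omega>"
    and new: "new = (if qh d0 + \<omega> < Max (range qh) - \<omega> then (LEAST a. \<forall>b. qh b \<le> qh a) else d0)"
  shows "q d0 \<le> q new" "q a \<le> q new + 4 * \<omega>"
proof -
  have mx: "qh b \<le> Max (range qh)" for b by (rule Max_ge) auto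
  have L: "\<forall>b. qh b \<le> qh (LEAST a. \<forall>b. qh b \<le> qh a)" using least_char by blast
  have a1: "qh x - \<omega> \<le> q x" "q x \<le> qh x + \<omega>" for x using ap[of x] by auto
  show "q d0 \<le> q new"
  proof (cases "qh d0 + \<omega> < Max (range qh) - \<omega>")
    case True
    have "Max (range qh) \<le> qh (LEAST a. \<forall>b. qh b \<le> qh a)"
      using L Max_in[of "range qh"] by auto
    moreover have eq: "new = (LEAST a. \<forall>b. qh b \<le> qh a)" using True new by simp
    ultimately show ?thesis unfolding eq using True a1[of d0] a1[of "LEAST a. \<forall>b. qh b \<le> qh a"] by linarith
  qed (use new in auto)
  show "q a \<le> q new + 4 * \<omega>"
  proof (cases "qh d0 + \<omega> < Max (range qh) - \<omega>")
    case True
    then show ?thesis using new L a1[of a] a1[of "LEAST a. \<forall>b. qh b \<le> qh a"] ap[of a]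
      by (smt (verit))
  next
    case False
    have eq: "new = d0" using False new by simp
    show ?thesis unfolding eq using False mx[of a] a1[of a] a1[of d0] by linarith
  qed
qed

lemma capi_meas:
  fixes qh :: "'s \<Rightarrow> 'a::{finite,linorder} \<Rightarrow> real"
  assumes d: "d \<in> M \<rightarrow>\<^sub>M count_space UNIV"
    and q[measurable]: "\<And>a. (\<lambda>s. qh s a) \<in> borel_measurable M"
  shows "(\<lambda>s. capi qh d \<omega> {} s) \<in> M \<rightarrow>\<^sub>M count_space UNIV"
proof -
  have qd[measurable]: "(\<lambda>s. qh s (d s)) \<in> borel_measurable M"
    by (rule measurable_compose_countable[OF q d])
  have mx[measurable]: "(\<lambda>s. Max (range (qh s))) \<in> borel_measurable M"
    by (rule borel_measurable_Max) auto
  have Lm: "(\<lambda>s. LEAST a. \<forall>b. qh s b \<le> qh s a) \<in> M \<rightarrow>\<^sub>M count_space UNIV"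
  proof (subst measurable_count_space_eq2_countable, safe)
    fix x
    have "(\<lambda>s. LEAST a. \<forall>b. qh s b \<le> qh s a) -` {x} \<inter> space M =
      {s \<in> space M. (\<forall>b. qh s b \<le> qh s x) \<and> (\<forall>c. (\<forall>b. qh s b \<le> qh s c) \<longrightarrow> x \<le> c)}"
      using least_char by blast
    also have "\<dots> \<in> sets M" by measurable
    finally show "(\<lambda>s. LEAST a. \<forall>b. qh s b \<le> qh s a) -` {x} \<inter> space M \<in> sets M" .
  qed auto
  have "(\<lambda>s. if qh s (d s) + \<omega> < Max (range (qh s)) - \<omega> then (LEAST a. \<forall>b. qh s b \<le> qh s a) else d s)
      \<in> M \<rightarrow>\<^sub>M count_space UNIV"
    by (rule measurable_If[OF Lm d]) measurable
  then show ?thesis unfolding capi_def by simp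
qed

theorem theorem3p5:
  fixes M :: "'s measure"
    and P :: "'s \<Rightarrow> 'a::{finite,linorder} \<Rightarrow> 's measure"
    and r :: "'s \<Rightarrow> 'a \<Rightarrow> real"
    and g \<omega> :: real
    and pi :: "nat \<Rightarrow> 's \<Rightarrow> 'a"
    and qh :: "nat \<Rightarrow> 's \<Rightarrow> 'a \<Rightarrow> real"
    and I :: nat
  assumes mdp: "is_mdp M P r g"
    and om: "0 < \<omega>" "\<omega> < 1"
    and I_def: "I = nat \<lceil>ln \<omega> / ln g\<rceil>"
    and pi0: "pi 0 \<in> M \<rightarrow>\<^sub>M count_space UNIV"
    and qh_meas: "\<forall>i\<in>{1..I}. \<forall>a. (\<lambda>s. qh i s a) \<in> borel_measurable M"
    and qh_approx: "\<forall>i\<in>{1..I}. \<forall>s\<in>space M. \<forall>a.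
                      \<bar>qh i s a - q_value P r g (pi (i - 1)) s a\<bar> \<le> \<omega>"
    and upd: "\<forall>i\<in>{1..I}. \<forall>s\<in>space M. pi i s = capi (qh i) (pi (i - 1)) \<omega> {} s"
  shows "\<forall>s\<in>space M. opt_value P r g s - mdp_value P r g (det_policy (pi I)) s \<le> 5 * \<omega> / (1 - g)"
  proof -
  interpret mdpc M P r g using mdp by (unfold_locales)
  have pm: "i \<le> I \<Longrightarrow> pi i \<in> M \<rightarrow>\<^sub>M count_space UNIV" for i
  proof (induction i)
    case 0 show ?case using pi0 .
  next
    case (Suc i)
    have i1: "Suc i \<in> {1..I}" using Suc.prems by auto
    have "(\<lambda>s. capi (qh (Suc i)) (pi i) \<omega> {} s) \<in> M \<rightarrow>\<^sub>M count_space UNIV"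
      by (rule capi_meas) (use Suc qh_meas i1 in auto)
    then show ?case
      by (subst measurable_cong[where g="\<lambda>s. capi (qh (Suc i)) (pi i) \<omega> {} s"]) (use upd i1 in auto)
  qed
  have facts: "V (pi i) s \<le> Q (pi i) s (pi (Suc i) s) \<and>
      (\<forall>a. Q (pi i) s a \<le> Q (pi i) s (pi (Suc i) s) + ennreal (4 * \<omega>))"
    if i: "Suc i \<le> I" and s: "s \<in> space M" for i s
  proof -
    have i1: "Suc i \<in> {1..I}" using i by auto
    have d: "pi i \<in> M \<rightarrow>\<^sub>M count_space UNIV" using pm i by simp
    let ?q = "q_value P r g (pi i) s"
    have ap: "\<And>a. \<bar>qh (Suc i) s a - ?q a\<bar> \<le> \<omega>" using qh_approx i1 s by (metis diff_Suc_1)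
    have new: "pi (Suc i) s = (if qh (Suc i) s (pi i s) + \<omega> < Max (range (qh (Suc i) s)) - \<omega>
        then (LEAST a. \<forall>b. qh (Suc i) s b \<le> qh (Suc i) s a) else pi i s)"
      using upd i1 s by (simp add: capi_def)
    note c = capi_real[OF ap new]
    have Qe: "Q (pi i) s a = ennreal (?q a)" for a by (rule q_eq[OF d s])
    have q0: "0 \<le> ?q a" for a by (simp add: q_value_def mdp_value_def)
    have "V (pi i) s \<le> Q (pi i) s (pi (Suc i) s)"
      unfolding V_fix[OF d s] Qe using c(1) by (simp add: ennreal_leI)
    moreover have "Q (pi i) s a \<le> Q (pi i) s (pi (Suc i) s) + ennreal (4 * \<omega>)" for a
    proof -
      have "ennreal (?q a) \<le> ennreal (?q (pi (Suc i) s) + 4 * \<omega>)" using c(2)[of a] by (simp add: ennreal_leI)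
      also have "\<dots> = ennreal (?q (pi (Suc i) s)) + ennreal (4 * \<omega>)" using q0 om by (simp add: ennreal_plus)
      finally show ?thesis unfolding Qe .
    qed
    ultimately show ?thesis by blast
  qed
  define e where "e = rec_nat B (\<lambda>_ x. 4 * \<omega> + g * x)"
  have e0: "e 0 = B" and eS: "e (Suc i) = 4 * \<omega> + g * e i" for i by (simp_all add: e_def)
  have epos: "0 \<le> e i" for i
    by (induction i) (use B_pos om g0 e0 eS in auto)
  have main: "i \<le> I \<Longrightarrow> s \<in> space M \<Longrightarrow> horizon_value P r g pol n h s \<le> V (pi i) s + ennreal (e i)"
    for i pol n h s
  proof (induction i arbitrary: pol n h s)
    case 0
    have "horizon_value P r g pol n h s \<le> ennreal B" by (rule H_bound[OF 0(2)])
    also have "\<dots> \<le> V (pi 0) s + ennreal (e 0)" unfolding e0 by (simp add: add_increasing)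
    finally show ?case .
  next
    case (Suc i)
    show ?case unfolding eS
    proof (rule step[OF pm pm epos])
      show "0 \<le> 4 * \<omega>" using om by simp
      fix pol n h s assume "s \<in> space M"
      then show "horizon_value P r g pol n h s \<le> V (pi i) s + ennreal (e i)" using Suc by simp
    next
      fix s a assume "s \<in> space M"
      then show "Q (pi i) s a \<le> Q (pi i) s (pi (Suc i) s) + ennreal (4 * \<omega>)" using facts Suc by blast
    next
      fix s assume "s \<in> space M"
      then show "V (pi i) s \<le> Q (pi i) s (pi (Suc i) s)" using facts Suc by blast
    qed (use Suc in auto)
  qed
  have ebound: "e i \<le> g ^ i * B + 4 * \<omega> * B" for i
  proof (induction i)
    case 0 then show ?case using e0 om B_pos by simp
  next
    case (Suc i)
    have "e (Suc i) \<le> 4 * \<omega> + g * (g ^ i * B + 4 * \<omega> * B)" unfolding eS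
      using Suc g0 by (simp add: mult_left_mono)
    also have "\<dots> = g ^ Suc i * B + 4 * \<omega> * (1 + g * B)" by (simp add: algebra_simps)
    also have "\<dots> = g ^ Suc i * B + 4 * \<omega> * B" using B_eq by simp
    finally show ?case .
  qed
  have gI: "g ^ I \<le> \<omega>"
  proof -
    have lg: "ln g < 0" using g0 g1 by simp
    have "ln \<omega> / ln g \<le> real I" unfolding I_def by linarith
    then have "real I * ln g \<le> ln \<omega>" using lg by (simp add: divide_le_eq mult.commute)
    then have "ln (g ^ I) \<le> ln \<omega>" using g0 by (simp add: ln_realpow)
    then show ?thesis using g0 om by simp
  qed
  show ?thesis
  proof
    fix s assume s: "s \<in> space M"
    define v where "v = mdp_value P r g (det_policy (pi I)) s"
    have v0: "0 \<le> v" unfolding v_def mdp_value_def by simp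
    have "(SUP pol. SUP n. horizon_value P r g pol n [] s) \<le> ennreal (v + e I)"
    proof (intro SUP_least)
      fix pol n
      have "horizon_value P r g pol n [] s \<le> V (pi I) s + ennreal (e I)" by (rule main) (use s in auto)
      also have "\<dots> = ennreal (v + e I)" unfolding v_def mdp_det[OF s] using epos v0 v_def by simp
      finally show "horizon_value P r g pol n [] s \<le> ennreal (v + e I)" .
    qed
    then have "opt_value P r g s \<le> enn2real (ennreal (v + e I))"
      unfolding opt_value_def by (intro enn2real_mono) auto
    moreover have "enn2real (ennreal (v + e I)) = v + e I" using v0 epos[of I] by (intro enn2real_ennreal) simp
    ultimately have "opt_value P r g s - v \<le> e I" by linarith
    also have "\<dots> \<le> g ^ I * B + 4 * \<omega> * B" by (rule ebound)
    also have "\<dots> \<le> \<omega> * B + 4 * \<omega> * B" using gI B_pos by simp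
    also have "\<dots> = 5 * \<omega> / (1 - g)" by (simp add: B_def algebra_simps)
    finally show "opt_value P r g s - mdp_value P r g (det_policy (pi I)) s \<le> 5 * \<omega> / (1 - g)"
      unfolding v_def .
  qed
qed

end
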